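(* Consider the system $\xi^+=F(\xi,u,\omega)$, $\omega\in\Omega(\xi,u)$, with sensor output $\upsilon=H(\xi,u,\omega)$, estimator $\hat\xi(k)=\Phi^\xi_k(\overline\xi,\mathbf u_{0:k-1},\boldsymbol\upsilon_{0:k-1})$, control $u=\hat\kappa(\hat\xi)$, estimation error $\varepsilon(k)=G_\varepsilon(\xi(k))-\hat\xi(k)$, $\overline\varepsilon:=G_\varepsilon(\xi(0))-\overline\xi$, and output $\zeta=G(\hat\xi)$. Suppose $\Phi^\xi_0$ is the identity map and there exist constants $a_1,a_2,a_3,a_4,c_1,c_2,c_3,c_4>0$, a closed set $\mathcal{S}\subseteq\Xi\times\hat\Xi$ that is robustly positively invariant, functions $V:\hat\Xi\to\mathbb{R}_{\ge0}$, $V_\varepsilon:\Xi\times\hat\Xi\to\mathbb{R}_{\ge0}$, and $\sigma,\sigma_\varepsilon\in\mathcal{K}$, such that $\frac{a_4c_4}{a_3c_1}<1$, $\frac{a_4c_4}{a_3c_3}<\frac{c_1}{c_1+c_2}$, and along every closed-loop trajectory with $(\xi(0),\overline\xi)\in\mathcal{S}$, at every time (with $^+$ denoting the next time step): $a_1|\zeta|^2\le V(\hat\xi)\le a_2|\zeta|^2$; $V(\hat\xi^+)\le V(\hat\xi)-a_3|\zeta|^2+a_4|(\varepsilon,\varepsilon^+)|^2+\sigma(|\omega|)$; $c_1|\varepsilon|^2\le V_\varepsilon(\xi,\hat\xi)\le c_2|\varepsilon|^2$; $V_\varepsilon(\xi^+,\hat\xi^+)\le V_\varepsilon(\xi,\hat\xi)-c_3|\varepsilon|^2+c_4|\zeta|^2+\sigma_\varepsilon(|\omega|)$.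 Then the closed-loop system is robustly exponentially stable in $\mathcal{S}$ w.r.t. $\zeta$: there exist $c_\zeta>0$, $\lambda_\zeta\in(0,1)$ and $\sigma_\zeta\in\mathcal{K}$ such that \[ |(\zeta(k),\varepsilon(k))|\le c_\zeta\lambda_\zeta^k|(\zeta(0),\overline\varepsilon)|+\sum_{i=0}^k\lambda_\zeta^i\sigma_\zeta(|\omega(k-i)|) \] for all $k\ge0$ and all closed-loop trajectories with $(\xi(0),\overline\xi)\in\mathcal{S}$.
   Context: $\Xi\subseteq\mathbb{R}^{n_\xi}$, $\hat\Xi\subseteq\mathbb{R}^{n_{\hat\xi}}$, $\Upsilon\subseteq\mathbb{R}^{n_\upsilon}$ are closed, $\mathbb{U}$ is the input set; $F(\xi,u,\omega)\in\Xi$ and $H(\xi,u,\omega)\in\Upsilon$ for $(\xi,u)\in\Xi\times\mathbb{U}$, $\omega\in\Omega(\xi,u)\ni0$; $\Phi^\xi_k:\hat\Xi\times\mathbb{U}^k\times\Upsilon^k\to\hat\Xi$; $\hat\kappa:\hat\Xi\to\mathbb{U}$; $G_\varepsilon:\Xi\to\hat\Xi$; $G:\hat\Xi\to\mathbb{R}^{n_\zeta}$; $\overline\xi\in\hat\Xi$ is the prior guess. A closed-loop trajectory is $(\boldsymbol\xi,\hat{\boldsymbol\xi},\mathbf u,\boldsymbol\omega,\boldsymbol\upsilon)$ with $\omega(k)\in\Omega(\xi(k),u(k))$, $\xi(k+1)=F(\xi(k),u(k),\omega(k))$, $\upsilon(k)=H(\xi(k),u(k),\omega(k))$, $\hat\xi(k)=\Phi^\xi_k(\overline\xi,\mathbf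 u_{0:k-1},\boldsymbol\upsilon_{0:k-1})$, $u(k)=\hat\kappa(\hat\xi(k))$. A closed set $\mathcal{S}$ is robustly positively invariant if every closed-loop trajectory with $(\xi(0),\overline\xi)\in\mathcal{S}$ satisfies $(\xi(k),\hat\xi(k))\in\mathcal{S}$ for all $k$. $\mathcal{K}$: continuous strictly increasing functions $\mathbb{R}_{\ge0}\to\mathbb{R}_{\ge0}$ vanishing at $0$. *)

theory Defs
  imports "HOL-Analysis.Analysis"
begin

definition class_K :: "(real \<Rightarrow> real) \<Rightarrow> bool" where
  "class_K \<sigma> \<longleftrightarrow> continuous_on {0..} \<sigma> \<and> strict_mono_on {0..} \<sigma> \<and> \<sigma> 0 = 0
      \<and> (\<forall>s\<ge>0. \<sigma> s \<ge> 0)"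

definition closed_loop ::
  "('x \<Rightarrow> 'u \<Rightarrow> 'w \<Rightarrow> 'x) \<Rightarrow> ('x \<Rightarrow> 'u \<Rightarrow> 'w \<Rightarrow> 'y) \<Rightarrow> ('x \<Rightarrow> 'u \<Rightarrow> 'w set)
   \<Rightarrow> (nat \<Rightarrow> 'e \<Rightarrow> 'u list \<Rightarrow> 'y list \<Rightarrow> 'e) \<Rightarrow> ('e \<Rightarrow> 'u) \<Rightarrow> 'e
   \<Rightarrow> (nat \<Rightarrow> 'x) \<Rightarrow> (nat \<Rightarrow> 'e) \<Rightarrow> (nat \<Rightarrow> 'u) \<Rightarrow> (nat \<Rightarrow> 'w) \<Rightarrow> (nat \<Rightarrow> 'y) \<Rightarrow> bool"
  where
  "closed_loop F H \<Omega> Phi \<kappa> xbar xi xh u w y \<longleftrightarrow>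
     (\<forall>k. w k \<in> \<Omega> (xi k) (u k)
        \<and> xi (Suc k) = F (xi k) (u k) (w k)
        \<and> y k = H (xi k) (u k) (w k)
        \<and> xh k = Phi k xbar (map u [0..<k]) (map y [0..<k])
        \<and> u k = \<kappa> (xh k))"

definition RPI ::
  "('x::topological_space \<times> 'e::topological_space) set \<Rightarrow>
   ('x \<Rightarrow> 'u \<Rightarrow> 'w \<Rightarrow> 'x) \<Rightarrow> ('x \<Rightarrow> 'u \<Rightarrow> 'w \<Rightarrow> 'y) \<Rightarrow> ('x \<Rightarrow> 'u \<Rightarrow> 'w set)
   \<Rightarrow> (nat \<Rightarrow> 'e \<Rightarrow> 'u list \<Rightarrow> 'y list \<Rightarrow> 'e) \<Rightarrow> ('e \<Rightarrow> 'u) \<Rightarrow> bool"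
  where
  "RPI S F H \<Omega> Phi \<kappa> \<longleftrightarrow> closed S \<and>
     (\<forall>xbar xi xh u w y. closed_loop F H \<Omega> Phi \<kappa> xbar xi xh u w y \<and> (xi 0, xbar) \<in> S
        \<longrightarrow> (\<forall>k. (xi k, xh k) \<in> S))"

end

theory Submission
  imports Defs
begin

lemma consts_exist:
  fixes a2 a3 a4 c1 c2 c3 c4 :: real
  assumes pos: "a2 > 0" "a3 > 0" "a4 > 0" "c1 > 0" "c2 > 0" "c3 > 0" "c4 > 0"
    and gain1: "a4 * c4 / (a3 * c1) < 1"
    and gain2: "a4 * c4 / (a3 * c3) < c1 / (c1 + c2)"
  shows "\<exists>\<nu> \<mu> \<rho>. \<mu> > 0 \<and> \<nu> = \<mu> + a4 / c1 \<and> 0 < \<rho> \<and> \<rho> < 1 \<and> a3 - \<nu> * c4 > 0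
     \<and> 1 - (a3 - \<nu> * c4) / a2 \<le> \<rho> \<and> \<nu> - (\<nu> * c3 - a4) / c2 \<le> \<rho> * \<mu>"
proof -
  define l where "l = max (a4 / c1) (a4 * (c1 + c2) / (c1 * c3))"
  have l1: "a4 / c1 < a3 / c4" using gain1 pos by (simp add: field_simps)
  have l2: "a4 * (c1 + c2) / (c1 * c3) < a3 / c4" using gain2 pos by (simp add: field_simps)
  have lu: "l < a3 / c4" using l1 l2 by (simp add: l_def)
  define \<nu> where "\<nu> = (l + a3 / c4) / 2"
  have nl: "\<nu> > l" using lu unfolding \<nu>_def by (simp add: field_simps)
  have nu: "\<nu> < a3 / c4"
  proof -
    have "\<And>x y::real. x < y \<Longrightarrow> (x + y) / 2 < y" by simp
    thus ?thesis using lu unfolding \<nu>_def by blast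
  qed
  define \<mu> where "\<mu> = \<nu> - a4 / c1"
  have mu: "\<mu> > 0" using nl by (simp add: \<mu>_def l_def)
  have alpha: "a3 - \<nu> * c4 > 0" using nu pos by (simp add: field_simps)
  have nb: "\<nu> > a4 * (c1 + c2) / (c1 * c3)" using nl by (simp add: l_def)
  hence "\<nu> * c3 - a4 > a4 * c2 / c1" using pos by (simp add: field_simps)
  hence "(\<nu> * c3 - a4) / c2 > a4 / c1" using pos by (simp add: field_simps)
  hence r2: "(\<nu> - (\<nu> * c3 - a4) / c2) / \<mu> < 1" using mu by (simp add: \<mu>_def)
  define \<rho> where "\<rho> = max (1/2) (max (1 - (a3 - \<nu> * c4) / a2) ((\<nu> - (\<nu> * c3 - a4) / c2) / \<mu>))"
  have r1: "1 - (a3 - \<nu> * c4) / a2 < 1" using alpha pos by simp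
  have "\<rho> < 1" using r1 r2 by (simp add: \<rho>_def)
  moreover have "\<rho> > 0" by (simp add: \<rho>_def)
  moreover have "1 - (a3 - \<nu> * c4) / a2 \<le> \<rho>" by (simp add: \<rho>_def)
  moreover have "(\<nu> - (\<nu> * c3 - a4) / c2) / \<mu> \<le> \<rho>" by (simp add: \<rho>_def)
  hence "\<nu> - (\<nu> * c3 - a4) / c2 \<le> \<rho> * \<mu>" using mu by (simp add: field_simps)
  ultimately show ?thesis using mu alpha
    by (intro exI[of _ \<nu>] exI[of _ \<mu>] exI[of _ \<rho>]) (simp add: \<mu>_def)
qed

lemma one_step:
  fixes a1 a2 a3 a4 c1 c2 c3 c4 z e e' V V' W W' s1 s2 \<nu> \<mu> \<rho> :: real
  assumes pos: "a2 > 0" "c1 > 0" "c2 > 0"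
    and k: "\<mu> > 0" "\<nu> = \<mu> + a4 / c1" "0 < \<rho>" "\<rho> < 1" "a3 - \<nu> * c4 > 0"
     "1 - (a3 - \<nu> * c4) / a2 \<le> \<rho>" "\<nu> - (\<nu> * c3 - a4) / c2 \<le> \<rho> * \<mu>"
    and h: "V \<le> a2 * z" "V' \<le> V - a3 * z + a4 * (e + e') + s1"
      "c1 * e \<le> W" "W \<le> c2 * e" "c1 * e' \<le> W'" "W' \<le> W - c3 * e + c4 * z + s2"
      "V \<ge> 0" "W \<ge> 0" "a4 \<ge> 0"
  shows "V' + \<mu> * W' \<le> \<rho> * (V + \<mu> * W) + s1 + \<nu> * s2"
proof -
  define \<alpha> where "\<alpha> = a3 - \<nu> * c4"
  define \<beta> where "\<beta> = \<nu> * c3 - a4"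
  have h1: "a4 * e' \<le> (a4 / c1) * W'"
  proof -
    have "a4 * e' = (a4 / c1) * (c1 * e')" using pos by simp
    also have "\<dots> \<le> (a4 / c1) * W'" using h(5) pos h(9) by (intro mult_left_mono) auto
    finally show ?thesis .
  qed
  have nu0: "\<nu> \<ge> 0" using k pos h(9) by auto
  have h3: "\<nu> * W' \<le> \<nu> * (W - c3 * e + c4 * z + s2)" using h(6) nu0 by (intro mult_left_mono)
  have h2: "V' + \<mu> * W' \<le> V + \<nu> * W - \<alpha> * z - \<beta> * e + s1 + \<nu> * s2"
    using h1 h3 h(2) k(2) unfolding \<alpha>_def \<beta>_def by (simp add: algebra_simps)
  have h4: "(\<alpha> / a2) * V \<le> \<alpha> * z"
  proof -
    have "(\<alpha> / a2) * V \<le> (\<alpha> / a2) * (a2 * z)" using h(1) k(5) pos by (intro mult_left_mono) (auto simp: \<alpha>_def)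
    thus ?thesis using pos by simp
  qed
  have b0: "\<beta> \<ge> 0"
  proof -
    have "\<nu> - \<beta> / c2 \<le> \<rho> * \<mu>" using k(7) by (simp add: \<beta>_def)
    moreover have "\<rho> * \<mu> \<le> \<mu>" using k(1) k(4) by simp
    moreover have "\<nu> \<ge> \<mu>" using k(2) h(9) pos by simp
    ultimately have "\<beta> / c2 \<ge> 0" by linarith
    thus ?thesis using pos by (simp add: zero_le_divide_iff)
  qed
  have h5: "(\<beta> / c2) * W \<le> \<beta> * e"
  proof -
    have "(\<beta> / c2) * W \<le> (\<beta> / c2) * (c2 * e)" using h(4) b0 pos by (intro mult_left_mono) auto
    thus ?thesis using pos by simp
  qed
  have h6: "(1 - \<alpha> / a2) * V \<le> \<rho> * V" using k(6) h(7) unfolding \<alpha>_def by (intro mult_right_mono)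
  have h7: "(\<nu> - \<beta> / c2) * W \<le> (\<rho> * \<mu>) * W" using k(7) h(8) unfolding \<beta>_def by (intro mult_right_mono)
  show ?thesis using h2 h4 h5 h6 h7 by (simp add: algebra_simps)
qed
lemma iter_bound:
  fixes y \<tau> :: "nat \<Rightarrow> real" and lam :: real
  assumes "\<And>k. y (Suc k) \<le> lam * y k + lam * \<tau> k" "lam \<ge> 0"
  shows "y k \<le> lam ^ k * y 0 + (\<Sum>i=1..k. lam ^ i * \<tau> (k - i))"
proof (induction k)
  case 0
  then show ?case by simp
next
  case (Suc k)
  have eq: "(\<Sum>i=1..Suc k. lam ^ i * \<tau> (Suc k - i)) = lam * \<tau> k + lam * (\<Sum>i=1..k. lam ^ i * \<tau> (k - i))"
  proof -
    have "(\<Sum>i=1..Suc k. lam ^ i * \<tau> (Suc k - i)) = (\<Sum>i=0..k. lam ^ Suc i * \<tau> (k - i))"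
      using sum.shift_bounds_cl_Suc_ivl[of "\<lambda>i. lam ^ i * \<tau> (Suc k - i)" 0 k] by simp
    also have "\<dots> = lam * \<tau> k + (\<Sum>i=1..k. lam ^ Suc i * \<tau> (k - i))"
      by (simp add: sum.atLeast_Suc_atMost)
    also have "\<dots> = lam * \<tau> k + lam * (\<Sum>i=1..k. lam ^ i * \<tau> (k - i))"
      by (simp add: sum_distrib_left mult.assoc)
    finally show ?thesis .
  qed
  have "y (Suc k) \<le> lam * y k + lam * \<tau> k" by (rule assms(1))
  also have "\<dots> \<le> lam * (lam ^ k * y 0 + (\<Sum>i=1..k. lam ^ i * \<tau> (k - i))) + lam * \<tau> k"
    using Suc assms(2) by (simp add: mult_left_mono)
  finally show ?case using eq by (simp add: algebra_simps)
qed

lemma classK_comb: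
  assumes "class_K \<sigma>" "class_K \<sigma>e" "\<nu> \<ge> 0" "C > 0"
  shows "class_K (\<lambda>r. C * sqrt (\<sigma> r + \<nu> * \<sigma>e r))"
  unfolding class_K_def
proof (intro conjI allI impI)
  show "continuous_on {0..} (\<lambda>r. C * sqrt (\<sigma> r + \<nu> * \<sigma>e r))"
    using assms(1,2) unfolding class_K_def by (intro continuous_intros) auto
  show "strict_mono_on {0..} (\<lambda>r. C * sqrt (\<sigma> r + \<nu> * \<sigma>e r))"
  proof (rule strict_mono_onI)
    fix r s :: real assume rs: "r \<in> {0..}" "s \<in> {0..}" "r < s"
    have "\<sigma> r < \<sigma> s" using assms(1) rs unfolding class_K_def strict_mono_on_def by blast
    moreover have "\<sigma>e r \<le> \<sigma>e s" using assms(2) rs unfolding class_K_def strict_mono_on_def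
      by (meson less_imp_le)
    hence "\<nu> * \<sigma>e r \<le> \<nu> * \<sigma>e s" using assms(3) by (rule mult_left_mono)
    ultimately show "C * sqrt (\<sigma> r + \<nu> * \<sigma>e r) < C * sqrt (\<sigma> s + \<nu> * \<sigma>e s)"
      using assms(4) by simp
  qed
  show "C * sqrt (\<sigma> 0 + \<nu> * \<sigma>e 0) = 0" using assms(1,2) unfolding class_K_def by simp
  fix s :: real assume "s \<ge> 0"
  thus "C * sqrt (\<sigma> s + \<nu> * \<sigma>e s) \<ge> 0" using assms unfolding class_K_def by simp
qed
theorem theorem3:
  fixes Xi :: "'x::euclidean_space set" and Xh :: "'e::euclidean_space set"
    and Ups :: "'y::euclidean_space set" and U :: "'u set"
    and F :: "'x \<Rightarrow> 'u \<Rightarrow> 'w::euclidean_space \<Rightarrow> 'x"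
    and H :: "'x \<Rightarrow> 'u \<Rightarrow> 'w \<Rightarrow> 'y"
    and \<Omega> :: "'x \<Rightarrow> 'u \<Rightarrow> 'w set"
    and Phi :: "nat \<Rightarrow> 'e \<Rightarrow> 'u list \<Rightarrow> 'y list \<Rightarrow> 'e"
    and \<kappa> :: "'e \<Rightarrow> 'u"
    and Ge :: "'x \<Rightarrow> 'e"
    and G :: "'e \<Rightarrow> 'z::euclidean_space"
    and S :: "('x \<times> 'e) set"
    and V :: "'e \<Rightarrow> real" and Ve :: "'x \<Rightarrow> 'e \<Rightarrow> real"
    and \<sigma> \<sigma>e :: "real \<Rightarrow> real"
    and a1 a2 a3 a4 c1 c2 c3 c4 :: real
  assumes closed_Xi: "closed Xi" and closed_Xh: "closed Xh" and closed_Ups: "closed Ups"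
    and F_in: "\<And>\<xi> v \<omega>. \<xi> \<in> Xi \<Longrightarrow> v \<in> U \<Longrightarrow> \<omega> \<in> \<Omega> \<xi> v \<Longrightarrow> F \<xi> v \<omega> \<in> Xi"
    and H_in: "\<And>\<xi> v \<omega>. \<xi> \<in> Xi \<Longrightarrow> v \<in> U \<Longrightarrow> \<omega> \<in> \<Omega> \<xi> v \<Longrightarrow> H \<xi> v \<omega> \<in> Ups"
    and Omega0: "\<And>\<xi> v. \<xi> \<in> Xi \<Longrightarrow> v \<in> U \<Longrightarrow> 0 \<in> \<Omega> \<xi> v"
    and Phi_in: "\<And>k x us ys. x \<in> Xh \<Longrightarrow> length us = k \<Longrightarrow> length ys = k \<Longrightarrow>
                   set us \<subseteq> U \<Longrightarrow> set ys \<subseteq> Ups \<Longrightarrow> Phi k x us ys \<in> Xh"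
    and kappa_in: "\<And>x. x \<in> Xh \<Longrightarrow> \<kappa> x \<in> U"
    and Ge_in: "\<And>\<xi>. \<xi> \<in> Xi \<Longrightarrow> Ge \<xi> \<in> Xh"
    and Phi0: "\<And>x. Phi 0 x [] [] = x"
    and pos: "a1 > 0" "a2 > 0" "a3 > 0" "a4 > 0" "c1 > 0" "c2 > 0" "c3 > 0" "c4 > 0"
    and S_sub: "S \<subseteq> Xi \<times> Xh"
    and S_RPI: "RPI S F H \<Omega> Phi \<kappa>"
    and V_nonneg: "\<And>x. x \<in> Xh \<Longrightarrow> V x \<ge> 0"
    and Ve_nonneg: "\<And>\<xi> x. \<xi> \<in> Xi \<Longrightarrow> x \<in> Xh \<Longrightarrow> Ve \<xi> x \<ge> 0"
    and K_\<sigma>: "class_K \<sigma>" and K_\<sigma>e: "class_K \<sigma>e"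
    and gain1: "a4 * c4 / (a3 * c1) < 1"
    and gain2: "a4 * c4 / (a3 * c3) < c1 / (c1 + c2)"
    and lyap: "\<And>xbar xi xh u w y k.
       closed_loop F H \<Omega> Phi \<kappa> xbar xi xh u w y \<Longrightarrow> (xi 0, xbar) \<in> S \<Longrightarrow>
         a1 * (norm (G (xh k)))\<^sup>2 \<le> V (xh k)
       \<and> V (xh k) \<le> a2 * (norm (G (xh k)))\<^sup>2
       \<and> V (xh (Suc k)) \<le> V (xh k) - a3 * (norm (G (xh k)))\<^sup>2
            + a4 * (norm (Ge (xi k) - xh k, Ge (xi (Suc k)) - xh (Suc k)))\<^sup>2 + \<sigma> (norm (w k))
       \<and> c1 * (norm (Ge (xi k) - xh k))\<^sup>2 \<le> Ve (xi k) (xh k)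
       \<and> Ve (xi k) (xh k) \<le> c2 * (norm (Ge (xi k) - xh k))\<^sup>2
       \<and> Ve (xi (Suc k)) (xh (Suc k)) \<le> Ve (xi k) (xh k) - c3 * (norm (Ge (xi k) - xh k))\<^sup>2
            + c4 * (norm (G (xh k)))\<^sup>2 + \<sigma>e (norm (w k))"
  shows "\<exists>c_z lam sig_z. c_z > 0 \<and> 0 < lam \<and> lam < 1 \<and> class_K sig_z \<and>
     (\<forall>xbar xi xh u w y. closed_loop F H \<Omega> Phi \<kappa> xbar xi xh u w y \<and> (xi 0, xbar) \<in> S \<longrightarrow>
       (\<forall>k. norm (G (xh k), Ge (xi k) - xh k)
            \<le> c_z * lam ^ k * norm (G (xh 0), Ge (xi 0) - xbar)
              + (\<Sum>i=0..k. lam ^ i * sig_z (norm (w (k - i))))))"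
  proof -
  obtain \<nu> \<mu> \<rho> where k: "\<mu> > 0" "\<nu> = \<mu> + a4 / c1" "0 < \<rho>" "\<rho> < 1" "a3 - \<nu> * c4 > 0"
     "1 - (a3 - \<nu> * c4) / a2 \<le> \<rho>" "\<nu> - (\<nu> * c3 - a4) / c2 \<le> \<rho> * \<mu>"
    using consts_exist[OF pos(2-8) gain1 gain2] by blast
  define m where "m = min a1 (\<mu> * c1)"
  define M where "M = max a2 (\<mu> * c2)"
  define lam where "lam = sqrt \<rho>"
  define C where "C = 1 / (lam * sqrt m)"
  define sig where "sig = (\<lambda>r. C * sqrt (\<sigma> r + \<nu> * \<sigma>e r))"
  have m0: "m > 0" using pos k(1) by (simp add: m_def)
  have M0: "M > 0" using pos by (simp add: M_def)
  have lam0: "lam > 0" and lam1: "lam < 1" using k(3,4) by (auto simp: lam_def)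
  have C0: "C > 0" using lam0 m0 by (simp add: C_def)
  have nu0: "\<nu> \<ge> 0" using k(1,2) pos by simp
  have Ksig: "class_K sig" unfolding sig_def by (rule classK_comb[OF K_\<sigma> K_\<sigma>e nu0 C0])
  have sig_nonneg: "0 \<le> \<sigma> r" "0 \<le> \<sigma>e r" if "r \<ge> 0" for r
    using K_\<sigma> K_\<sigma>e that unfolding class_K_def by blast+
  have main: "norm (G (xh k), Ge (xi k) - xh k)
            \<le> sqrt (M / m) * lam ^ k * norm (G (xh 0), Ge (xi 0) - xbar)
              + (\<Sum>i=0..k. lam ^ i * sig (norm (w (k - i))))"
    if cl: "closed_loop F H \<Omega> Phi \<kappa> xbar xi xh u w y" and S0: "(xi 0, xbar) \<in> S" for xbar xi xh u w y k
  proof -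
    note ly = lyap[OF cl S0]
    define z where "z = (\<lambda>k. (norm (G (xh k)))\<^sup>2)"
    define e where "e = (\<lambda>k. (norm (Ge (xi k) - xh k))\<^sup>2)"
    define L where "L = (\<lambda>k. V (xh k) + \<mu> * Ve (xi k) (xh k))"
    define s where "s = (\<lambda>k. \<sigma> (norm (w k)) + \<nu> * \<sigma>e (norm (w k)))"
    define Y where "Y = (\<lambda>k. sqrt (L k))"
    define \<tau> where "\<tau> = (\<lambda>k. sig (norm (w k)) * sqrt m)"
    have z0: "z k \<ge> 0" and e0: "e k \<ge> 0" for k by (auto simp: z_def e_def)
    have V0: "V (xh k) \<ge> 0" for k using ly[of k] z0[of k] pos(1) unfolding z_def
      by (meson order_trans zero_le_mult_iff less_imp_le)
    have W0: "Ve (xi k) (xh k) \<ge> 0" for k using ly[of k] e0[of k] pos(5) unfolding e_def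
      by (meson order_trans zero_le_mult_iff less_imp_le)
    have L0: "L k \<ge> 0" for k using V0[of k] W0[of k] k(1) by (simp add: L_def)
    have s0: "s k \<ge> 0" for k using sig_nonneg[of "norm (w k)"] nu0 by (simp add: s_def)
    have Lstep: "L (Suc k) \<le> \<rho> * L k + s k" for k
    proof -
      have f: "V (xh k) \<le> a2 * z k"
        "V (xh (Suc k)) \<le> V (xh k) - a3 * z k + a4 * (e k + e (Suc k)) + \<sigma> (norm (w k))"
        "c1 * e k \<le> Ve (xi k) (xh k)" "Ve (xi k) (xh k) \<le> c2 * e k"
        "c1 * e (Suc k) \<le> Ve (xi (Suc k)) (xh (Suc k))"
        "Ve (xi (Suc k)) (xh (Suc k)) \<le> Ve (xi k) (xh k) - c3 * e k + c4 * z k + \<sigma>e (norm (w k))"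
        using ly[of k] ly[of "Suc k"] unfolding z_def e_def by (simp_all add: norm_Pair)
      have "V (xh (Suc k)) + \<mu> * Ve (xi (Suc k)) (xh (Suc k))
         \<le> \<rho> * (V (xh k) + \<mu> * Ve (xi k) (xh k)) + \<sigma> (norm (w k)) + \<nu> * \<sigma>e (norm (w k))"
        by (rule one_step[OF pos(2) pos(5) pos(6) k f V0[of k] W0[of k]]) (use pos(4) in simp)
      thus ?thesis by (simp add: L_def s_def)
    qed
    have Ystep: "Y (Suc k) \<le> lam * Y k + lam * \<tau> k" for k
    proof -
      have "Y (Suc k) \<le> sqrt (\<rho> * L k + s k)" unfolding Y_def using Lstep[of k] by simp
      also have "\<dots> \<le> sqrt (\<rho> * L k) + sqrt (s k)"
        by (rule sqrt_add_le_add_sqrt) (use k(3) L0[of k] s0[of k] in auto)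
      also have "sqrt (\<rho> * L k) = lam * Y k" by (simp add: lam_def Y_def real_sqrt_mult)
      also have "sqrt (s k) = lam * \<tau> k"
        using lam0 m0 by (simp add: \<tau>_def sig_def C_def s_def)
      finally show ?thesis .
    qed
    have Yk: "Y k \<le> lam ^ k * Y 0 + (\<Sum>i=1..k. lam ^ i * \<tau> (k - i))"
      using iter_bound[of Y lam \<tau> k] Ystep lam0 by simp
    have xh0: "xh 0 = xbar" using cl Phi0 unfolding closed_loop_def by auto
    have nk: "norm (G (xh k), Ge (xi k) - xh k) = sqrt (z k + e k)" for k
      by (simp add: norm_Pair z_def e_def)
    have lowL: "m * (z k + e k) \<le> L k" for k
    proof -
      have "m * z k \<le> a1 * z k" using z0[of k] by (intro mult_right_mono) (auto simp: m_def)
      moreover have "m * e k \<le> (\<mu> * c1) * e k" using e0[of k] by (intro mult_right_mono) (auto simp: m_def)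
      moreover have "(\<mu> * c1) * e k \<le> \<mu> * Ve (xi k) (xh k)"
        using ly[of k] k(1) unfolding e_def by (simp add: mult.assoc)
      ultimately show ?thesis using ly[of k] unfolding L_def z_def by (simp add: algebra_simps)
    qed
    have upL: "L 0 \<le> M * (z 0 + e 0)"
    proof -
      have "a2 * z 0 \<le> M * z 0" using z0[of 0] by (intro mult_right_mono) (auto simp: M_def)
      moreover have "(\<mu> * c2) * e 0 \<le> M * e 0" using e0[of 0] by (intro mult_right_mono) (auto simp: M_def)
      moreover have "\<mu> * Ve (xi 0) (xh 0) \<le> (\<mu> * c2) * e 0"
        using ly[of 0] k(1) unfolding e_def by (simp add: mult.assoc)
      ultimately show ?thesis using ly[of 0] unfolding L_def z_def by (simp add: algebra_simps)
    qed
    have n0: "norm (G (xh 0), Ge (xi 0) - xbar) = sqrt (z 0 + e 0)" using nk[of 0] xh0 by simp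
    have "sqrt (z k + e k) \<le> Y k / sqrt m"
    proof -
      have "z k + e k \<le> L k / m" using lowL[of k] m0 by (simp add: field_simps)
      hence "sqrt (z k + e k) \<le> sqrt (L k / m)" by simp
      thus ?thesis by (simp add: Y_def real_sqrt_divide)
    qed
    also have "\<dots> \<le> (lam ^ k * Y 0 + (\<Sum>i=1..k. lam ^ i * \<tau> (k - i))) / sqrt m"
      using Yk m0 by (simp add: divide_right_mono)
    also have "\<dots> = lam ^ k * (Y 0 / sqrt m) + (\<Sum>i=1..k. lam ^ i * sig (norm (w (k - i))))"
      using m0 by (simp add: \<tau>_def add_divide_distrib sum_divide_distrib)
    also have "Y 0 / sqrt m \<le> sqrt (M / m) * sqrt (z 0 + e 0)"
    proof -
      have "Y 0 \<le> sqrt (M * (z 0 + e 0))" unfolding Y_def using upL by simp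
      hence "Y 0 / sqrt m \<le> sqrt (M * (z 0 + e 0)) / sqrt m" using m0 by (simp add: divide_right_mono)
      also have "\<dots> = sqrt (M / m) * sqrt (z 0 + e 0)" by (simp add: real_sqrt_mult real_sqrt_divide)
      finally show ?thesis .
    qed
    hence "lam ^ k * (Y 0 / sqrt m) \<le> lam ^ k * (sqrt (M / m) * sqrt (z 0 + e 0))"
      using lam0 by (intro mult_left_mono) auto
    hence "lam ^ k * (Y 0 / sqrt m) + (\<Sum>i=1..k. lam ^ i * sig (norm (w (k - i))))
        \<le> sqrt (M / m) * lam ^ k * norm (G (xh 0), Ge (xi 0) - xbar) + (\<Sum>i=1..k. lam ^ i * sig (norm (w (k - i))))"
      using n0 by (simp add: algebra_simps)
    also have "(\<Sum>i=1..k. lam ^ i * sig (norm (w (k - i)))) \<le> (\<Sum>i=0..k. lam ^ i * sig (norm (w (k - i))))"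
    proof (rule sum_mono2)
      show "\<And>b. b \<in> {0..k} - {1..k} \<Longrightarrow> 0 \<le> lam ^ b * sig (norm (w (k - b)))"
        using Ksig lam0 unfolding class_K_def by auto
    qed auto
    finally show ?thesis using nk[of k] by simp
  qed
  show ?thesis
    apply (rule exI[of _ "sqrt (M / m)"], rule exI[of _ lam], rule exI[of _ sig])
    using m0 M0 lam0 lam1 Ksig main by auto
qed

end
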